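(* Each of the exposure metrics $ED$, $ER$, $DTD$, $DTR$, $DID$, $DIR$ satisfies distinguishability of groups: for every population $\mathcal D$ with uniform relevance, $v_{\mathrm{last}}(m,\mathcal D)<v_{\mathrm{opt}}(m)<v_{\mathrm{first}}(m,\mathcal D)$.
   Context: A population is a finite set $\mathcal{D}$ of candidates partitioned into two nonempty groups, a non-protected group $G_0$ and a protected group $G_1$; each candidate $d$ has relevance $y(d)\in\mathbb R$. For a candidate set $D\subseteq\mathcal D$ with $n=|D|$, a ranking is a bijection $r:\{1,\dots,n\}\to D$, $r^{-1}(d)$ denotes the position of $d$. Uniform relevance means $y(d)=1$ for all $d\in\mathcal D$. $\mathcal R_{\mathrm{first}}(D)$ ($\mathcal R_{\mathrm{last}}(D)$) is the set of rankings of $D$ in which every candidate of $G_1\cap D$ is ranked above (below) every candidate of $G_0\cap D$. Under uniform relevance, $v_{\mathrm{first}}(m,D)$ and $v_{\mathrm{last}}(m,D)$ denote the (common) values of $m$ on rankings in $\mathcal R_{\mathrm{first}}(D)$ and $\mathcal R_{\mathrm{last}}(D)$. Position bias $b(k)=1/\log_2(k+1)$. Exposure metrics: for a ranking $r$ of $D$ and $G\in\{G_0,G_1\}$, $\mathrm{Exposure}(G|r)=\frac{1}{|G|}\sum_{d\in G\cap D} b(r^{-1}(d))$, $Y(G)=\frac1{|G|}\sum_{d\in G}y(d)$, $CTR(G|r)=\frac1{|G|}\sum_{d\in G\cap D} b(r^{-1}(d))\,y(d)$ (here $|G|$ is the size of the group in the whole population). Then $ED(r)=\mathrm{Exposure}(G_1|r)-\mathrm{Exposure}(G_0|r)$,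 $ER(r)=\mathrm{Exposure}(G_1|r)/\mathrm{Exposure}(G_0|r)$, $DTD(r)=\frac{\mathrm{Exposure}(G_1|r)}{Y(G_1)}-\frac{\mathrm{Exposure}(G_0|r)}{Y(G_0)}$, $DTR(r)=\frac{\mathrm{Exposure}(G_1|r)}{\mathrm{Exposure}(G_0|r)}\cdot\frac{Y(G_0)}{Y(G_1)}$, $DID(r)=\frac{CTR(G_1|r)}{Y(G_1)}-\frac{CTR(G_0|r)}{Y(G_0)}$, $DIR(r)=\frac{CTR(G_1|r)}{CTR(G_0|r)}\cdot\frac{Y(G_0)}{Y(G_1)}$. Optimal values: $v_{\mathrm{opt}}=0$ for $ED,DTD,DID$ and $v_{\mathrm{opt}}=1$ for $ER,DTR,DIR$. *)

theory Defs
  imports Complex_Main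
begin

definition bias :: "nat \<Rightarrow> real" where
  "bias k = 1 / log 2 (real k + 1)"

definition is_ranking :: "'a set \<Rightarrow> (nat \<Rightarrow> 'a) \<Rightarrow> bool" where
  "is_ranking D r \<longleftrightarrow> bij_betw r {1..card D} D"

definition pos :: "'a set \<Rightarrow> (nat \<Rightarrow> 'a) \<Rightarrow> 'a \<Rightarrow> nat" where
  "pos D r d = the_inv_into {1..card D} r d"

definition R_first :: "'a set \<Rightarrow> 'a set \<Rightarrow> 'a set \<Rightarrow> (nat \<Rightarrow> 'a) set" where
  "R_first D G0 G1 = {r. is_ranking D r \<and>
     (\<forall>d1\<in>G1 \<inter> D. \<forall>d0\<in>G0 \<inter> D. pos D r d1 < pos D r d0)}"

definition R_last :: "'a set \<Rightarrow> 'a set \<Rightarrow> 'a set \<Rightarrow> (nat \<Rightarrow> 'a) set" where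
  "R_last D G0 G1 = {r. is_ranking D r \<and>
     (\<forall>d1\<in>G1 \<inter> D. \<forall>d0\<in>G0 \<inter> D. pos D r d0 < pos D r d1)}"

text \<open>Exposure(G|r), Y(G), CTR(G|r); |G| is the size of the group in the population.\<close>
definition exposure :: "'a set \<Rightarrow> 'a set \<Rightarrow> (nat \<Rightarrow> 'a) \<Rightarrow> real" where
  "exposure D G r = (\<Sum>d\<in>G \<inter> D. bias (pos D r d)) / real (card G)"

definition Yavg :: "('a \<Rightarrow> real) \<Rightarrow> 'a set \<Rightarrow> real" where
  "Yavg y G = (\<Sum>d\<in>G. y d) / real (card G)"

definition ctr :: "'a set \<Rightarrow> ('a \<Rightarrow> real) \<Rightarrow> 'a set \<Rightarrow> (nat \<Rightarrow> 'a) \<Rightarrow> real" where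
  "ctr D y G r = (\<Sum>d\<in>G \<inter> D. bias (pos D r d) * y d) / real (card G)"

datatype metric = ED | ER | DTD | DTR | DID | DIR

text \<open>Value of metric m on ranking r of D, with groups G0 (non-protected), G1 (protected).\<close>
fun metric_val :: "metric \<Rightarrow> 'a set \<Rightarrow> 'a set \<Rightarrow> 'a set \<Rightarrow> ('a \<Rightarrow> real) \<Rightarrow> (nat \<Rightarrow> 'a) \<Rightarrow> real" where
  "metric_val ED D G0 G1 y r = exposure D G1 r - exposure D G0 r"
| "metric_val ER D G0 G1 y r = exposure D G1 r / exposure D G0 r"
| "metric_val DTD D G0 G1 y r = exposure D G1 r / Yavg y G1 - exposure D G0 r / Yavg y G0"
| "metric_val DTR D G0 G1 y r = (exposure D G1 r / exposure D G0 r) * (Yavg y G0 / Yavg y G1)"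
| "metric_val DID D G0 G1 y r = ctr D y G1 r / Yavg y G1 - ctr D y G0 r / Yavg y G0"
| "metric_val DIR D G0 G1 y r = (ctr D y G1 r / ctr D y G0 r) * (Yavg y G0 / Yavg y G1)"

fun v_opt :: "metric \<Rightarrow> real" where
  "v_opt ED = 0" | "v_opt ER = 1" | "v_opt DTD = 0"
| "v_opt DTR = 1" | "v_opt DID = 0" | "v_opt DIR = 1"

end

theory Submission
  imports Defs
begin

lemma avg_lt:
  fixes f g :: "'b \<Rightarrow> real"
  assumes "finite A" "finite B" "A \<noteq> {}" "B \<noteq> {}"
    and "\<forall>a\<in>A. \<forall>b\<in>B. g b < f a"
  shows "sum g B / card B < sum f A / card A"
proof -
  have "Min (f ` A) \<in> f ` A" using assms(1,3) by (intro Min_in) auto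
  then obtain a0 where a0': "a0 \<in> A" "f a0 = Min (f ` A)" by auto
  hence a0: "a0 \<in> A" "\<forall>a\<in>A. f a0 \<le> f a" using assms(1) by auto
  have "Max (g ` B) \<in> g ` B" using assms(2,4) by (intro Max_in) auto
  then obtain b0 where b0': "b0 \<in> B" "g b0 = Max (g ` B)" by auto
  hence b0: "b0 \<in> B" "\<forall>b\<in>B. g b \<le> g b0" using assms(2) by auto
  have cA: "real (card A) > 0" using assms(1,3) by (simp add: card_gt_0_iff)
  have cB: "real (card B) > 0" using assms(2,4) by (simp add: card_gt_0_iff)
  have "sum g B \<le> real (card B) * g b0" using sum_bounded_above[of B g "g b0"] b0 by simp
  hence 1: "sum g B / card B \<le> g b0" using cB by (simp add: divide_le_eq mult.commute)
  have "real (card A) * f a0 \<le> sum f A" using sum_bounded_below[of A "f a0" f] a0 by simp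
  hence 2: "f a0 \<le> sum f A / card A" using cA by (simp add: le_divide_eq mult.commute)
  have "g b0 < f a0" using assms(5) a0 b0 by blast
  with 1 2 show ?thesis by linarith
qed

lemma bias_pos: "1 \<le> k \<Longrightarrow> 0 < bias k"
  unfolding bias_def by simp

lemma bias_less: "1 \<le> i \<Longrightarrow> i < j \<Longrightarrow> bias j < bias i"
  unfolding bias_def
proof -
  assume h: "1 \<le> i" "i < j"
  have "0 < log 2 (real i + 1)" using h by simp
  moreover have "log 2 (real i + 1) < log 2 (real j + 1)" using h by simp
  ultimately show "1 / log 2 (real j + 1) < 1 / log 2 (real i + 1)"
    by (simp add: frac_less2)
qed

lemma pos_ge1:
  assumes "is_ranking D r" "d \<in> D"
  shows "1 \<le> pos D r d"
proof -
  have "bij_betw r {1..card D} D" using assms(1) by (simp add: is_ranking_def)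
  hence "inj_on r {1..card D}" "r ` {1..card D} = D" by (auto simp: bij_betw_def)
  hence "the_inv_into {1..card D} r d \<in> {1..card D}"
    using assms(2) by (metis subset_refl the_inv_into_into)
  thus ?thesis by (simp add: pos_def)
qed

lemma exp_gt:
  assumes "finite D" "G0 \<union> G1 = D" "G0 \<noteq> {}" "G1 \<noteq> {}" "is_ranking D r"
    and "\<forall>d1\<in>G1 \<inter> D. \<forall>d0\<in>G0 \<inter> D. pos D r d1 < pos D r d0"
  shows "0 < exposure D G0 r \<and> exposure D G0 r < exposure D G1 r"
proof -
  have i0: "G0 \<inter> D = G0" and i1: "G1 \<inter> D = G1" using assms(2) by auto
  have f0: "finite G0" and f1: "finite G1" using assms(1,2) by (auto intro: finite_subset)
  have "(\<Sum>d\<in>G0. bias (pos D r d)) / card G0 < (\<Sum>d\<in>G1. bias (pos D r d)) / card G1"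
    apply (rule avg_lt[OF f1 f0 assms(4,3)])
    using assms(6) i0 i1 assms(2) pos_ge1[OF assms(5)] bias_less by (metis UnI2)
  moreover have "0 < (\<Sum>d\<in>G0. bias (pos D r d))"
    apply (rule sum_pos[OF f0 assms(3)])
    using pos_ge1[OF assms(5)] bias_pos assms(2) by blast
  moreover have "real (card G0) > 0" using f0 assms(3) by (simp add: card_gt_0_iff)
  ultimately show ?thesis unfolding exposure_def i0 i1 by simp
qed

lemma yavg1:
  assumes "finite G" "G \<noteq> {}" "\<forall>d\<in>G. y d = 1"
  shows "Yavg y G = 1"
  using assms by (simp add: Yavg_def card_gt_0_iff)

lemma ctr_exp:
  assumes "\<forall>d\<in>G. y d = 1"
  shows "ctr D y G r = exposure D G r"
  using assms unfolding ctr_def exposure_def by simp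

theorem theorem2:
  fixes D G0 G1 :: "'a set" and y :: "'a \<Rightarrow> real" and m :: metric
    and r_last r_first :: "nat \<Rightarrow> 'a"
  assumes "finite D"
    and "G0 \<union> G1 = D" and "G0 \<inter> G1 = {}"
    and "G0 \<noteq> {}" and "G1 \<noteq> {}"
    and "\<forall>d\<in>D. y d = 1"
    and "r_last \<in> R_last D G0 G1"
    and "r_first \<in> R_first D G0 G1"
  shows "metric_val m D G0 G1 y r_last < v_opt m \<and> v_opt m < metric_val m D G0 G1 y r_first"
proof -
  have L: "0 < exposure D G1 r_last \<and> exposure D G1 r_last < exposure D G0 r_last"
    apply (rule exp_gt[of D G1 G0 r_last])
    using assms(1-5,7) by (auto simp: R_last_def)
  have F: "0 < exposure D G0 r_first \<and> exposure D G0 r_first < exposure D G1 r_first"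
    apply (rule exp_gt)
    using assms(1-5,8) by (auto simp: R_first_def)
  have f0: "finite G0" and f1: "finite G1" using assms(1,2) by (auto intro: finite_subset)
  have y0: "\<forall>d\<in>G0. y d = 1" and y1: "\<forall>d\<in>G1. y d = 1" using assms(2,6) by auto
  have Y0: "Yavg y G0 = 1" by (rule yavg1[OF f0 assms(4) y0])
  have Y1: "Yavg y G1 = 1" by (rule yavg1[OF f1 assms(5) y1])
  have C: "\<And>r. ctr D y G0 r = exposure D G0 r" "\<And>r. ctr D y G1 r = exposure D G1 r"
    using ctr_exp[OF y0] ctr_exp[OF y1] by auto
  show ?thesis
    using L F by (cases m) (auto simp: Y0 Y1 C divide_less_eq less_divide_eq)
qed

end
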